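(* Let $1<a<b$ be coprime integers and let $D,E\subseteq G$ be subdiagrams. Then \[ B(\mathbf{1}_D,\mathbf{1}_E)=\mathtt{dinv}(D,E), \] where $\mathbf{1}_D,\mathbf{1}_E\in\mathbb{R}^G$ are the indicator vectors of $D$ and $E$.
   Context: Fix coprime integers $1<a<b$. Work in the grid $\mathbb{Z}^2$, with $+x$ pointing east and $+y$ pointing north; elements of $\mathbb{Z}^2$ are called cells. Let $g:\mathbb{Z}^2\to\mathbb{Z}$, $g(x,y)=ab-ax-by$. For a cell $c=(x,y)$ and an integer $k$, write $c-ka:=(x+k,y)$ and $c-kb:=(x,y+k)$. Let $G=\{(x,y)\in\mathbb{Z}_{\ge1}^2: g(x,y)>0\}$. A subdiagram is a subset $D\subseteq G$ such that whenever $(x,y)\in D$, $(x',y')\in G$, $x'\le x$ and $y'\le y$, we have $(x',y')\in D$. Define $K(d)=\mathbf{1}_{d\ge0}-\mathbf{1}_{d\ge a}-\mathbf{1}_{d\ge b}+\mathbf{1}_{d\ge a+b}$ for $d\in\mathbb{Z}$, the quadratic form $Q(\mathbf{n})=\sum_{i,j\in G}K(g(j)-g(i))\,n_in_j$ on $\mathbb{R}^G$, and let $B$ be the unique symmetric bilinear form on $\mathbb{R}^G$ with $B(\mathbf{n},\mathbf{n})=Q(\mathbf{n})$, namely \[ B(\mathbf{n},\mathbf{n}')=\tfrac12\sum_{i,j\in G}K(g(j)-g(i))\,(n_in'_j+n'_in_j). \] For a subdiagram $D$ and $c\in D$, let $\mathrm{arm}_D(c)=\max\{k\ge0: c-ka\in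 D\}$ and $\mathrm{leg}_D(c)=\max\{k\ge 0: c-kb\in D\}$. For subdiagrams $D,E$ and $c\in D\cap E$ define the mixed cross hook slopes \[ m_D^E(c)=\frac{\mathrm{leg}_E(c)}{\mathrm{arm}_D(c)+1},\qquad M_D^E(c)=\frac{\mathrm{leg}_E(c)+1}{\mathrm{arm}_D(c)}\] (with $M_D^E(c)=+\infty$ if $\mathrm{arm}_D(c)=0$), and the cross-dinv \[ \mathtt{dinv}(D,E)=\tfrac12\Big(\#\{c\in D\cap E: m_D^E(c)<\tfrac ab<M_D^E(c)\}+\#\{c\in D\cap E: m_E^D(c)<\tfrac ab<M_E^D(c)\}\Big). \] *)

theory Defs
  imports "HOL-Analysis.Analysis"
begin

type_synonym cell = "int \<times> int"

definition gfun :: "int \<Rightarrow> int \<Rightarrow> cell \<Rightarrow> int" where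
  "gfun a b c = a * b - a * fst c - b * snd c"

definition Gset :: "int \<Rightarrow> int \<Rightarrow> cell set" where
  "Gset a b = {(x, y). x \<ge> 1 \<and> y \<ge> 1 \<and> gfun a b (x, y) > 0}"

definition subdiagram :: "int \<Rightarrow> int \<Rightarrow> cell set \<Rightarrow> bool" where
  "subdiagram a b D \<longleftrightarrow> D \<subseteq> Gset a b \<and>
     (\<forall>x y x' y'. (x, y) \<in> D \<longrightarrow> (x', y') \<in> Gset a b \<longrightarrow> x' \<le> x \<longrightarrow> y' \<le> y
        \<longrightarrow> (x', y') \<in> D)"

definition Kfun :: "int \<Rightarrow> int \<Rightarrow> int \<Rightarrow> int" where
  "Kfun a b d = (if d \<ge> 0 then 1 else 0) - (if d \<ge> a then 1 else 0)
     - (if d \<ge> b then 1 else 0) + (if d \<ge> a + b then 1 else 0)"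

definition Qform :: "int \<Rightarrow> int \<Rightarrow> (cell \<Rightarrow> real) \<Rightarrow> real" where
  "Qform a b n = (\<Sum>i\<in>Gset a b. \<Sum>j\<in>Gset a b.
      of_int (Kfun a b (gfun a b j - gfun a b i)) * n i * n j)"

definition Bform :: "int \<Rightarrow> int \<Rightarrow> (cell \<Rightarrow> real) \<Rightarrow> (cell \<Rightarrow> real) \<Rightarrow> real" where
  "Bform a b n n' = (1/2) * (\<Sum>i\<in>Gset a b. \<Sum>j\<in>Gset a b.
      of_int (Kfun a b (gfun a b j - gfun a b i)) * (n i * n' j + n' i * n j))"

text \<open>c - k a = (x + k, y);  c - k b = (x, y + k)\<close>
definition arm :: "cell set \<Rightarrow> cell \<Rightarrow> nat" where
  "arm D c = Max {k::nat. (fst c + int k, snd c) \<in> D}"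

definition leg :: "cell set \<Rightarrow> cell \<Rightarrow> nat" where
  "leg D c = Max {k::nat. (fst c, snd c + int k) \<in> D}"

text \<open>m_D^E(c) < a/b < M_D^E(c), with M = +infinity when arm_D(c) = 0.\<close>
definition slope_cond :: "int \<Rightarrow> int \<Rightarrow> cell set \<Rightarrow> cell set \<Rightarrow> cell \<Rightarrow> bool" where
  "slope_cond a b D E c \<longleftrightarrow>
     real (leg E c) / (real (arm D c) + 1) < real_of_int a / real_of_int b \<and>
     (arm D c = 0 \<or> real_of_int a / real_of_int b < (real (leg E c) + 1) / real (arm D c))"

definition dinv :: "int \<Rightarrow> int \<Rightarrow> cell set \<Rightarrow> cell set \<Rightarrow> real" where
  "dinv a b D E = (1/2) * (real (card {c \<in> D \<inter> E. slope_cond a b D E c})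
                          + real (card {c \<in> D \<inter> E. slope_cond a b E D c}))"

end

theory Submission
  imports Defs
begin

definition Kt :: "int \<Rightarrow> int \<Rightarrow> int \<Rightarrow> real" where
  "Kt a b d = of_int (Kfun a b d + Kfun a b (-d))"

definition chi :: "int \<Rightarrow> int \<Rightarrow> int \<Rightarrow> int \<Rightarrow> real" where
  "chi a b r l = (if 0 \<le> r \<and> 0 \<le> l \<and> b * l < a * r + a \<and> a * r < b * l + b then 1 else 0)"

definition psi :: "int \<Rightarrow> int \<Rightarrow> int \<Rightarrow> int \<Rightarrow> real" where
  "psi a b r l = chi a b r l - chi a b (r-1) l - chi a b r (l-1) + chi a b (r-1) (l-1)"

lemma psi_pos:
  fixes a b u v :: int
  assumes "0 < a" "a < b" "0 \<le> u" "0 \<le> v" "u \<noteq> 0 \<or> v \<noteq> 0"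
  shows "psi a b u v = Kt a b (a * u - b * v)"
proof -
  have eq: "a * (u - 1) = a * u - a" "b * (v - 1) = b * v - b" by (simp_all add: algebra_simps)
  have m: "- (a * u - b * v) = b * v - a * u" by simp
  obtain P Q where PQ: "a * u = P" "b * v = Q" by blast
  consider "u = 0" "v = 1" | "u = 0" "v \<ge> 2" | "u \<ge> 1" "v = 0" | "u \<ge> 1" "v \<ge> 1"
    using assms by linarith
  then show ?thesis
  proof cases
    case 1
    have "P = 0" "Q = b" unfolding PQ[symmetric] using 1 by auto
    then show ?thesis using 1 assms unfolding psi_def chi_def Kt_def Kfun_def eq m PQ by auto
  next
    case 2
    have "Q \<ge> 2 * b" unfolding PQ[symmetric] using 2 assms by (simp add: mult_left_mono)
    moreover have "P = 0" unfolding PQ[symmetric] using 2 by auto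
    ultimately show ?thesis using 2 assms unfolding psi_def chi_def Kt_def Kfun_def eq m PQ by auto
  next
    case 3
    have "P \<ge> a" unfolding PQ[symmetric] using 3 assms by (simp add: mult_left_mono)
    moreover have "Q = 0" unfolding PQ[symmetric] using 3 by auto
    ultimately show ?thesis using 3 assms unfolding psi_def chi_def Kt_def Kfun_def eq m PQ by auto
  next
    case 4
    have "P \<ge> a" unfolding PQ[symmetric] using 4 assms by (simp add: mult_left_mono)
    moreover have "Q \<ge> b" unfolding PQ[symmetric] using 4 assms by (simp add: mult_left_mono)
    ultimately show ?thesis using 4 assms unfolding psi_def chi_def Kt_def Kfun_def eq m PQ by auto
  qed
qed

lemma pair_point:
  fixes a b u v :: int
  assumes "0 < a" "a < b"
  shows "(if 0 \<le> u \<and> 0 \<le> v then psi a b u v else 0)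
       + (if u \<le> 0 \<and> v \<le> 0 then psi a b (-u) (-v) else 0) = Kt a b (a * u - b * v)"
proof -
  have Ksym: "Kt a b (-d) = Kt a b d" for d by (simp add: Kt_def)
  consider "u = 0" "v = 0" | "0 \<le> u" "0 \<le> v" "u \<noteq> 0 \<or> v \<noteq> 0"
    | "u \<le> 0" "v \<le> 0" "u \<noteq> 0 \<or> v \<noteq> 0" | "u > 0" "v < 0" | "u < 0" "v > 0"
    by linarith
  then show ?thesis
  proof cases
    case 1 then show ?thesis using assms by (simp add: psi_def chi_def Kt_def Kfun_def)
  next
    case 2
    then have "\<not> (u \<le> 0 \<and> v \<le> 0)" by auto
    then have e1: "(if u \<le> 0 \<and> v \<le> 0 then psi a b (-u) (-v) else 0) = 0" by auto
    have e2: "(if 0 \<le> u \<and> 0 \<le> v then psi a b u v else 0) = psi a b u v" using 2 by simp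
    show ?thesis unfolding e1 e2 using 2 assms psi_pos[of a b u v] by simp
  next
    case 3
    then have "\<not> (0 \<le> u \<and> 0 \<le> v)" by auto
    then have e1: "(if 0 \<le> u \<and> 0 \<le> v then psi a b u v else 0) = 0" by auto
    have e2: "(if u \<le> 0 \<and> v \<le> 0 then psi a b (-u) (-v) else 0) = psi a b (-u) (-v)" using 3 by simp
    have "psi a b (-u) (-v) = Kt a b (a * (-u) - b * (-v))"
      using 3 assms by (intro psi_pos) auto
    moreover have "a * (-u) - b * (-v) = - (a * u - b * v)" by simp
    ultimately have "psi a b (-u) (-v) = Kt a b (- (a * u - b * v))" by (simp only:)
    then have "psi a b (-u) (-v) = Kt a b (a * u - b * v)" by (simp only: Ksym)
    then show ?thesis unfolding e1 e2 by simp
  next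
    case 4
    have "a * u \<ge> a" using 4 assms by (simp add: mult_left_mono)
    moreover have "b * v \<le> - b" using 4 assms
    proof -
      have "b * (-v) \<ge> b * 1" using 4 assms by (intro mult_left_mono) auto
      then show ?thesis by simp
    qed
    ultimately have "a * u - b * v \<ge> a + b" by linarith
    then show ?thesis using 4 assms by (simp add: Kt_def Kfun_def)
  next
    case 5
    have "a * u \<le> - a" using 5 assms
    proof -
      have "a * (-u) \<ge> a * 1" using 5 assms by (intro mult_left_mono) auto
      then show ?thesis by simp
    qed
    moreover have "b * v \<ge> b" using 5 assms by (simp add: mult_left_mono)
    ultimately have "a * u - b * v \<le> - (a + b)" by linarith
    then show ?thesis using 5 assms by (simp add: Kt_def Kfun_def)
  qed
qed

lemma tele:
  fixes h :: "int \<Rightarrow> real" and n :: int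
  assumes "0 \<le> n"
  shows "(\<Sum>k\<in>{0..n}. h k - h (k - 1)) = h n - h (-1)"
  using assms
proof (induction n rule: int_ge_induct)
  case base then show ?case by simp
next
  case (step i)
  have "{0..i+1} = insert (i+1) {0..i}" using step.hyps
    using atLeastAtMostPlus1_int_conv[of 0 i] by (simp add: add.commute)
  then show ?case using step by simp
qed

lemma chi_tele:
  fixes r l :: int
  assumes "0 \<le> r" "0 \<le> l"
  shows "chi a b r l = (\<Sum>r'\<in>{0..r}. \<Sum>l'\<in>{0..l}. psi a b r' l')"
proof -
  have "(\<Sum>l'\<in>{0..l}. psi a b r' l') = chi a b r' l - chi a b (r' - 1) l" for r'
  proof -
    have "(\<Sum>l'\<in>{0..l}. psi a b r' l')
        = (\<Sum>l'\<in>{0..l}. (\<lambda>k. chi a b r' k - chi a b (r' - 1) k) l'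
                     - (\<lambda>k. chi a b r' k - chi a b (r' - 1) k) (l' - 1))"
      by (intro sum.cong refl) (simp add: psi_def algebra_simps)
    also have "\<dots> = chi a b r' l - chi a b (r' - 1) l - (chi a b r' (-1) - chi a b (r' - 1) (-1))"
      by (rule tele[OF assms(2)])
    finally show ?thesis by (simp add: chi_def)
  qed
  then have "(\<Sum>r'\<in>{0..r}. \<Sum>l'\<in>{0..l}. psi a b r' l')
     = (\<Sum>r'\<in>{0..r}. (\<lambda>k. chi a b k l) r' - (\<lambda>k. chi a b k l) (r' - 1))"
    by simp
  also have "\<dots> = chi a b r l - chi a b (-1) l" by (rule tele[OF assms(1)])
  finally show ?thesis by (simp add: chi_def)
qed

lemma G_bounds:
  assumes "0 < a" "0 < b" "(x, y) \<in> Gset a b"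
  shows "1 \<le> x \<and> x < b \<and> 1 \<le> y \<and> y < a"
proof -
  have x1: "1 \<le> x" and y1: "1 \<le> y" and g: "a * b - a * x - b * y > 0"
    using assms(3) by (auto simp: Gset_def gfun_def)
  have "b * y \<ge> b * 1" using y1 assms by (intro mult_left_mono) auto
  then have "a * x < a * b" using g assms(2) by linarith
  then have "x < b" using assms(1) by simp
  moreover have ax: "a * x \<ge> a * 1" using x1 assms by (intro mult_left_mono) auto
  have "b * y < a * b" using g ax assms(1) by linarith
  then have "b * y < b * a" by (simp add: mult.commute)
  then have "y < a" using assms(2) by simp
  ultimately show ?thesis using x1 y1 by simp
qed

lemma finite_G:
  assumes "0 < a" "0 < b"
  shows "finite (Gset a b)"
proof -
  have "Gset a b \<subseteq> {1..b} \<times> {1..a}"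
    using G_bounds[OF assms] by fastforce
  then show ?thesis by (rule finite_subset) simp
qed

lemma sub_down:
  assumes "subdiagram a b D" "0 < a" "0 < b" "(x, y) \<in> D"
    "1 \<le> x'" "1 \<le> y'" "x' \<le> x" "y' \<le> y"
  shows "(x', y') \<in> D"
proof -
  have "(x, y) \<in> Gset a b" using assms(1,4) by (auto simp: subdiagram_def)
  then have g: "a * b - a * x - b * y > 0" by (simp add: Gset_def gfun_def)
  have "a * x' \<le> a * x" using assms by (intro mult_left_mono) auto
  moreover have "b * y' \<le> b * y" using assms by (intro mult_left_mono) auto
  ultimately have "a * b - a * x' - b * y' > 0" using g by linarith
  then have "(x', y') \<in> Gset a b" using assms(5,6) by (simp add: Gset_def gfun_def)
  then show ?thesis using assms(1,4,7,8) unfolding subdiagram_def by blast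
qed

lemma sub_finite:
  assumes "subdiagram a b D" "0 < a" "0 < b"
  shows "finite D"
  using assms finite_G[OF assms(2,3)] by (auto simp: subdiagram_def intro: finite_subset)

lemma sub_G:
  assumes "subdiagram a b D" "c \<in> D"
  shows "c \<in> Gset a b"
  using assms by (auto simp: subdiagram_def)

lemma arm_char:
  assumes "subdiagram a b D" "0 < a" "0 < b" "c \<in> D" "0 \<le> k"
  shows "(fst c + k, snd c) \<in> D \<longleftrightarrow> k \<le> int (arm D c)"
proof -
  define S where "S = {k::nat. (fst c + int k, snd c) \<in> D}"
  have cG: "1 \<le> fst c" "1 \<le> snd c"
    using G_bounds[OF assms(2,3), of "fst c" "snd c"] sub_G[OF assms(1,4)] by auto
  have "S \<subseteq> {..<nat b}"
  proof
    fix j assume "j \<in> S"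
    then have "(fst c + int j, snd c) \<in> Gset a b" using sub_G[OF assms(1)] by (auto simp: S_def)
    then have "fst c + int j < b" using G_bounds[OF assms(2,3)] by blast
    then show "j \<in> {..<nat b}" using cG by auto
  qed
  then have fin: "finite S" by (rule finite_subset) simp
  have "0 \<in> S" using assms(4) by (simp add: S_def)
  then have armS: "arm D c \<in> S" and armge: "\<And>j. j \<in> S \<Longrightarrow> j \<le> arm D c"
    using fin unfolding arm_def S_def[symmetric] by (auto intro: Max_in Max_ge)
  show ?thesis
  proof
    assume "(fst c + k, snd c) \<in> D"
    then have "nat k \<in> S" using assms(5) by (simp add: S_def)
    then show "k \<le> int (arm D c)" using armge assms(5) by fastforce
  next
    assume "k \<le> int (arm D c)"
    moreover have "(fst c + int (arm D c), snd c) \<in> D" using armS by (simp add: S_def)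
    ultimately show "(fst c + k, snd c) \<in> D"
      using sub_down[OF assms(1,2,3)] cG assms(5) by simp
  qed
qed

lemma leg_char:
  assumes "subdiagram a b D" "0 < a" "0 < b" "c \<in> D" "0 \<le> k"
  shows "(fst c, snd c + k) \<in> D \<longleftrightarrow> k \<le> int (leg D c)"
proof -
  define S where "S = {k::nat. (fst c, snd c + int k) \<in> D}"
  have cG: "1 \<le> fst c" "1 \<le> snd c"
    using G_bounds[OF assms(2,3), of "fst c" "snd c"] sub_G[OF assms(1,4)] by auto
  have "S \<subseteq> {..<nat a}"
  proof
    fix j assume "j \<in> S"
    then have "(fst c, snd c + int j) \<in> Gset a b" using sub_G[OF assms(1)] by (auto simp: S_def)
    then have "snd c + int j < a" using G_bounds[OF assms(2,3)] by blast
    then show "j \<in> {..<nat a}" using cG by auto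
  qed
  then have fin: "finite S" by (rule finite_subset) simp
  have "0 \<in> S" using assms(4) by (simp add: S_def)
  then have legS: "leg D c \<in> S" and legge: "\<And>j. j \<in> S \<Longrightarrow> j \<le> leg D c"
    using fin unfolding leg_def S_def[symmetric] by (auto intro: Max_in Max_ge)
  show ?thesis
  proof
    assume "(fst c, snd c + k) \<in> D"
    then have "nat k \<in> S" using assms(5) by (simp add: S_def)
    then show "k \<le> int (leg D c)" using legge assms(5) by fastforce
  next
    assume "k \<le> int (leg D c)"
    moreover have "(fst c, snd c + int (leg D c)) \<in> D" using legS by (simp add: S_def)
    ultimately show "(fst c, snd c + k) \<in> D"
      using sub_down[OF assms(1,2,3)] cG assms(5) by simp
  qed
qed

lemma row_sum:
  fixes f :: "int \<Rightarrow> real"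
  assumes "subdiagram a b D" "0 < a" "0 < b" "c \<in> D"
  shows "(\<Sum>k\<in>{0..int (arm D c)}. f k)
       = (\<Sum>z\<in>D. if snd z = snd c \<and> fst c \<le> fst z then f (fst z - fst c) else 0)"
proof -
  have fin: "finite D" by (rule sub_finite[OF assms(1-3)])
  have set: "{z \<in> D. snd z = snd c \<and> fst c \<le> fst z}
      = (\<lambda>k. (fst c + k, snd c)) ` {0..int (arm D c)}"
  proof (rule set_eqI)
    fix z
    show "z \<in> {z \<in> D. snd z = snd c \<and> fst c \<le> fst z} \<longleftrightarrow>
          z \<in> (\<lambda>k. (fst c + k, snd c)) ` {0..int (arm D c)}"
    proof
      assume z: "z \<in> {z \<in> D. snd z = snd c \<and> fst c \<le> fst z}"
      then have "(fst c + (fst z - fst c), snd c) \<in> D" by (cases z) auto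
      then have "fst z - fst c \<le> int (arm D c)" using arm_char[OF assms, of "fst z - fst c"] z by auto
      then show "z \<in> (\<lambda>k. (fst c + k, snd c)) ` {0..int (arm D c)}"
        using z by (intro image_eqI[of _ _ "fst z - fst c"]) (cases z; auto)+
    next
      assume "z \<in> (\<lambda>k. (fst c + k, snd c)) ` {0..int (arm D c)}"
      then obtain k where k: "0 \<le> k" "k \<le> int (arm D c)" "z = (fst c + k, snd c)" by auto
      then show "z \<in> {z \<in> D. snd z = snd c \<and> fst c \<le> fst z}"
        using arm_char[OF assms k(1)] by auto
    qed
  qed
  have "(\<Sum>z\<in>D. if snd z = snd c \<and> fst c \<le> fst z then f (fst z - fst c) else 0)
      = (\<Sum>z\<in>{z \<in> D. snd z = snd c \<and> fst c \<le> fst z}. f (fst z - fst c))"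
    using fin by (simp add: sum.inter_filter)
  also have "\<dots> = (\<Sum>z\<in>(\<lambda>k. (fst c + k, snd c)) ` {0..int (arm D c)}. f (fst z - fst c))"
    by (simp only: set)
  also have "\<dots> = (\<Sum>k\<in>{0..int (arm D c)}. f k)"
    by (subst sum.reindex) (auto simp: inj_on_def)
  finally show ?thesis by simp
qed

lemma col_sum:
  fixes f :: "int \<Rightarrow> real"
  assumes "subdiagram a b D" "0 < a" "0 < b" "c \<in> D"
  shows "(\<Sum>k\<in>{0..int (leg D c)}. f k)
       = (\<Sum>z\<in>D. if fst z = fst c \<and> snd c \<le> snd z then f (snd z - snd c) else 0)"
proof -
  have fin: "finite D" by (rule sub_finite[OF assms(1-3)])
  have set: "{z \<in> D. fst z = fst c \<and> snd c \<le> snd z}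
      = (\<lambda>k. (fst c, snd c + k)) ` {0..int (leg D c)}"
  proof (rule set_eqI)
    fix z
    show "z \<in> {z \<in> D. fst z = fst c \<and> snd c \<le> snd z} \<longleftrightarrow>
          z \<in> (\<lambda>k. (fst c, snd c + k)) ` {0..int (leg D c)}"
    proof
      assume z: "z \<in> {z \<in> D. fst z = fst c \<and> snd c \<le> snd z}"
      then have "(fst c, snd c + (snd z - snd c)) \<in> D" by (cases z) auto
      then have "snd z - snd c \<le> int (leg D c)" using leg_char[OF assms, of "snd z - snd c"] z by auto
      then show "z \<in> (\<lambda>k. (fst c, snd c + k)) ` {0..int (leg D c)}"
        using z by (intro image_eqI[of _ _ "snd z - snd c"]) (cases z; auto)+
    next
      assume "z \<in> (\<lambda>k. (fst c, snd c + k)) ` {0..int (leg D c)}"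
      then obtain k where k: "0 \<le> k" "k \<le> int (leg D c)" "z = (fst c, snd c + k)" by auto
      then show "z \<in> {z \<in> D. fst z = fst c \<and> snd c \<le> snd z}"
        using leg_char[OF assms k(1)] by auto
    qed
  qed
  have "(\<Sum>z\<in>D. if fst z = fst c \<and> snd c \<le> snd z then f (snd z - snd c) else 0)
      = (\<Sum>z\<in>{z \<in> D. fst z = fst c \<and> snd c \<le> snd z}. f (snd z - snd c))"
    using fin by (simp add: sum.inter_filter)
  also have "\<dots> = (\<Sum>z\<in>(\<lambda>k. (fst c, snd c + k)) ` {0..int (leg D c)}. f (snd z - snd c))"
    by (simp only: set)
  also have "\<dots> = (\<Sum>k\<in>{0..int (leg D c)}. f k)"
    by (subst sum.reindex) (auto simp: inj_on_def)
  finally show ?thesis by simp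
qed

lemma cond_equiv:
  assumes "0 < a" "0 < b"
  shows "slope_cond a b D E c \<longleftrightarrow>
    b * int (leg E c) < a * int (arm D c) + a \<and> a * int (arm D c) < b * int (leg E c) + b"
proof -
  define r where "r = arm D c"
  define l where "l = leg E c"
  have ra: "real_of_int a > 0" "real_of_int b > 0" using assms by auto
  have c1: "real l / (real r + 1) < real_of_int a / real_of_int b \<longleftrightarrow> b * int l < a * int r + a"
  proof -
    have "real l / (real r + 1) < real_of_int a / real_of_int b \<longleftrightarrow>
          real l * real_of_int b < real_of_int a * (real r + 1)"
      using ra by (simp add: divide_simps)
    also have "\<dots> \<longleftrightarrow> real_of_int (b * int l) < real_of_int (a * int r + a)"
      by (simp add: algebra_simps)
    also have "\<dots> \<longleftrightarrow> b * int l < a * int r + a" by (rule of_int_less_iff)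
    finally show ?thesis .
  qed
  have c2: "r > 0 \<Longrightarrow> real_of_int a / real_of_int b < (real l + 1) / real r \<longleftrightarrow> a * int r < b * int l + b"
  proof -
    assume r: "r > 0"
    have "real_of_int a / real_of_int b < (real l + 1) / real r \<longleftrightarrow>
          real_of_int a * real r < (real l + 1) * real_of_int b"
      using ra r by (simp add: divide_simps)
    also have "\<dots> \<longleftrightarrow> real_of_int (a * int r) < real_of_int (b * int l + b)"
      by (simp add: algebra_simps)
    also have "\<dots> \<longleftrightarrow> a * int r < b * int l + b" by (rule of_int_less_iff)
    finally show ?thesis .
  qed
  have h0: "b * int l \<ge> 0" using assms by simp
  have h1: "0 < b * int l + b" using h0 assms(2) by linarith
  have c3: "r = 0 \<Longrightarrow> a * int r < b * int l + b" using h1 by simp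
  show ?thesis unfolding slope_cond_def r_def[symmetric] l_def[symmetric]
    using c1 c2 c3 h1 by (cases "r = 0") auto
qed

lemma lemA:
  assumes sD: "subdiagram a b D" and sE: "subdiagram a b E" and a0: "0 < a" and b0: "0 < b"
  shows "real (card {c \<in> D \<inter> E. slope_cond a b D E c})
    = (\<Sum>z\<in>D. \<Sum>w\<in>E. if fst w \<le> fst z \<and> snd z \<le> snd w
                        then psi a b (fst z - fst w) (snd w - snd z) else 0)"
proof -
  have finD: "finite D" by (rule sub_finite[OF sD a0 b0])
  have finE: "finite E" by (rule sub_finite[OF sE a0 b0])
  have finDE: "finite (D \<inter> E)" using finD by simp
  define F where "F = (\<lambda>c z w. if snd z = snd c \<and> fst c \<le> fst z \<and> fst w = fst c \<and> snd c \<le> snd w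
       then psi a b (fst z - fst c) (snd w - snd c) else (0::real))"
  have "real (card {c \<in> D \<inter> E. slope_cond a b D E c})
      = (\<Sum>c\<in>{c \<in> D \<inter> E. slope_cond a b D E c}. 1)"
    by (rule real_of_card)
  also have "\<dots> = (\<Sum>c\<in>D \<inter> E. if slope_cond a b D E c then 1 else 0)"
    by (rule sum.inter_filter[OF finDE])
  also have "\<dots> = (\<Sum>c\<in>D \<inter> E. chi a b (int (arm D c)) (int (leg E c)))"
    by (intro sum.cong refl) (simp add: cond_equiv[OF a0 b0] chi_def)
  also have "\<dots> = (\<Sum>c\<in>D \<inter> E. \<Sum>z\<in>D. \<Sum>w\<in>E. F c z w)"
  proof (intro sum.cong refl)
    fix c assume c: "c \<in> D \<inter> E"
    have "chi a b (int (arm D c)) (int (leg E c))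
        = (\<Sum>r'\<in>{0..int (arm D c)}. \<Sum>l'\<in>{0..int (leg E c)}. psi a b r' l')"
      by (rule chi_tele) auto
    also have "\<dots> = (\<Sum>z\<in>D. if snd z = snd c \<and> fst c \<le> fst z
                then (\<Sum>l'\<in>{0..int (leg E c)}. psi a b (fst z - fst c) l') else 0)"
      by (rule row_sum[OF sD a0 b0]) (use c in auto)
    also have "\<dots> = (\<Sum>z\<in>D. if snd z = snd c \<and> fst c \<le> fst z
                then (\<Sum>w\<in>E. if fst w = fst c \<and> snd c \<le> snd w
                        then psi a b (fst z - fst c) (snd w - snd c) else 0) else 0)"
    proof (intro sum.cong refl)
      fix z
      have cE: "c \<in> E" using c by simp
      show "(if snd z = snd c \<and> fst c \<le> fst z
                then (\<Sum>l'\<in>{0..int (leg E c)}. psi a b (fst z - fst c) l') else 0)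
          = (if snd z = snd c \<and> fst c \<le> fst z
                then (\<Sum>w\<in>E. if fst w = fst c \<and> snd c \<le> snd w
                        then psi a b (fst z - fst c) (snd w - snd c) else 0) else 0)"
        using col_sum[OF sE a0 b0 cE, of "psi a b (fst z - fst c)"] by simp
    qed
    also have "\<dots> = (\<Sum>z\<in>D. \<Sum>w\<in>E. F c z w)"
      unfolding F_def by (intro sum.cong refl) auto
    finally show "chi a b (int (arm D c)) (int (leg E c)) = (\<Sum>z\<in>D. \<Sum>w\<in>E. F c z w)" .
  qed
  also have "\<dots> = (\<Sum>z\<in>D. \<Sum>c\<in>D \<inter> E. \<Sum>w\<in>E. F c z w)"
    by (rule sum.swap)
  also have "\<dots> = (\<Sum>z\<in>D. \<Sum>w\<in>E. \<Sum>c\<in>D \<inter> E. F c z w)"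
    by (intro sum.cong refl sum.swap)
  also have "\<dots> = (\<Sum>z\<in>D. \<Sum>w\<in>E. if fst w \<le> fst z \<and> snd z \<le> snd w
                        then psi a b (fst z - fst w) (snd w - snd z) else 0)"
  proof (intro sum.cong refl)
    fix z w assume z: "z \<in> D" and w: "w \<in> E"
    let ?P = "fst w \<le> fst z \<and> snd z \<le> snd w"
    have "(\<Sum>c\<in>D \<inter> E. F c z w)
       = (\<Sum>c\<in>D \<inter> E. if c = (fst w, snd z) then
            (if ?P then psi a b (fst z - fst w) (snd w - snd z) else 0) else 0)"
      unfolding F_def by (intro sum.cong refl) auto
    also have "\<dots> = (if (fst w, snd z) \<in> D \<inter> E then
            (if ?P then psi a b (fst z - fst w) (snd w - snd z) else 0) else 0)"
      by (rule sum.delta[OF finDE])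
    also have "\<dots> = (if ?P then psi a b (fst z - fst w) (snd w - snd z) else 0)"
    proof (cases ?P)
      case True
      have zG: "1 \<le> fst z" "1 \<le> snd z"
        using G_bounds[OF a0 b0, of "fst z" "snd z"] sub_G[OF sD z] by auto
      have wG: "1 \<le> fst w" "1 \<le> snd w"
        using G_bounds[OF a0 b0, of "fst w" "snd w"] sub_G[OF sE w] by auto
      have "(fst w, snd z) \<in> D"
        using sub_down[OF sD a0 b0, of "fst z" "snd z" "fst w" "snd z"] z zG wG True by simp
      moreover have "(fst w, snd z) \<in> E"
        using sub_down[OF sE a0 b0, of "fst w" "snd w" "fst w" "snd z"] w zG wG True by simp
      ultimately show ?thesis by simp
    next
      case False
      then show ?thesis by auto
    qed
    finally show "(\<Sum>c\<in>D \<inter> E. F c z w) = (if ?P then psi a b (fst z - fst w) (snd w - snd z) else 0)" .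
  qed
  finally show ?thesis .
qed

lemma sum_ind2:
  fixes f :: "cell \<Rightarrow> cell \<Rightarrow> real"
  assumes "finite G" "X \<subseteq> G" "Y \<subseteq> G"
  shows "(\<Sum>i\<in>G. \<Sum>j\<in>G. f i j * (indicator X i * indicator Y j)) = (\<Sum>i\<in>X. \<Sum>j\<in>Y. f i j)"
proof -
  have "(\<Sum>i\<in>G. \<Sum>j\<in>G. f i j * (indicator X i * indicator Y j))
      = (\<Sum>i\<in>G. if i \<in> X then (\<Sum>j\<in>G. if j \<in> Y then f i j else 0) else 0)"
    by (auto simp: indicator_def intro!: sum.cong)
  also have "\<dots> = (\<Sum>i\<in>G \<inter> X. \<Sum>j\<in>G \<inter> Y. f i j)"
    using assms(1) by (simp add: sum.inter_restrict)
  also have "\<dots> = (\<Sum>i\<in>X. \<Sum>j\<in>Y. f i j)"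
    using assms(2,3) by (simp add: Int_absorb1)
  finally show ?thesis .
qed

lemma B_expand:
  assumes sD: "subdiagram a b D" and sE: "subdiagram a b E" and a0: "0 < a" and b0: "0 < b"
  shows "Bform a b (indicator D) (indicator E)
       = 1/2 * (\<Sum>z\<in>D. \<Sum>w\<in>E. Kt a b (gfun a b w - gfun a b z))"
proof -
  let ?G = "Gset a b"
  let ?K = "\<lambda>i j. real_of_int (Kfun a b (gfun a b j - gfun a b i))"
  have finG: "finite ?G" by (rule finite_G[OF a0 b0])
  have DG: "D \<subseteq> ?G" and EG: "E \<subseteq> ?G" using sD sE by (auto simp: subdiagram_def)
  have "Bform a b (indicator D) (indicator E)
      = 1/2 * ((\<Sum>i\<in>?G. \<Sum>j\<in>?G. ?K i j * (indicator D i * indicator E j))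
             + (\<Sum>i\<in>?G. \<Sum>j\<in>?G. ?K i j * (indicator E i * indicator D j)))"
    unfolding Bform_def by (simp add: sum.distrib[symmetric] algebra_simps)
  also have "\<dots> = 1/2 * ((\<Sum>i\<in>D. \<Sum>j\<in>E. ?K i j) + (\<Sum>i\<in>E. \<Sum>j\<in>D. ?K i j))"
    using sum_ind2[OF finG DG EG, of ?K] sum_ind2[OF finG EG DG, of ?K] by simp
  also have "(\<Sum>i\<in>E. \<Sum>j\<in>D. ?K i j) = (\<Sum>j\<in>D. \<Sum>i\<in>E. ?K i j)"
    by (rule sum.swap)
  also have "(\<Sum>i\<in>D. \<Sum>j\<in>E. ?K i j) + (\<Sum>j\<in>D. \<Sum>i\<in>E. ?K i j)
      = (\<Sum>z\<in>D. \<Sum>w\<in>E. Kt a b (gfun a b w - gfun a b z))"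
    by (simp add: sum.distrib[symmetric] Kt_def)
  finally show ?thesis .
qed

theorem theorem1p2:
  fixes a b :: int and D E :: "cell set"
  assumes "1 < a" and "a < b" and "coprime a b"
    and "subdiagram a b D" and "subdiagram a b E"
  shows "Bform a b (indicator D) (indicator E) = dinv a b D E"
proof -
  have a0: "0 < a" and b0: "0 < b" using assms(1,2) by auto
  note sD = assms(4) and sE = assms(5)
  have c2: "{c \<in> D \<inter> E. slope_cond a b E D c} = {c \<in> E \<inter> D. slope_cond a b E D c}" by blast
  have A2: "real (card {c \<in> D \<inter> E. slope_cond a b E D c})
     = (\<Sum>z\<in>D. \<Sum>w\<in>E. if fst z \<le> fst w \<and> snd w \<le> snd z
                        then psi a b (fst w - fst z) (snd z - snd w) else 0)"
    unfolding c2 lemA[OF sE sD a0 b0] by (rule sum.swap)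
  have "dinv a b D E = 1/2 * (\<Sum>z\<in>D. \<Sum>w\<in>E.
      (if fst w \<le> fst z \<and> snd z \<le> snd w then psi a b (fst z - fst w) (snd w - snd z) else 0)
    + (if fst z \<le> fst w \<and> snd w \<le> snd z then psi a b (fst w - fst z) (snd z - snd w) else 0))"
    unfolding dinv_def lemA[OF sD sE a0 b0] A2 by (simp add: sum.distrib)
  also have "\<dots> = 1/2 * (\<Sum>z\<in>D. \<Sum>w\<in>E. Kt a b (gfun a b w - gfun a b z))"
  proof -
    have "(if fst w \<le> fst z \<and> snd z \<le> snd w then psi a b (fst z - fst w) (snd w - snd z) else 0)
      + (if fst z \<le> fst w \<and> snd w \<le> snd z then psi a b (fst w - fst z) (snd z - snd w) else 0)
      = Kt a b (gfun a b w - gfun a b z)" for z w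
    proof -
      have p: "gfun a b w - gfun a b z = a * (fst z - fst w) - b * (snd w - snd z)"
        by (simp add: gfun_def algebra_simps)
      have e: "psi a b (-(fst z - fst w)) (-(snd w - snd z)) = psi a b (fst w - fst z) (snd z - snd w)"
        by simp
      have q1: "(0 \<le> fst z - fst w \<and> 0 \<le> snd w - snd z) = (fst w \<le> fst z \<and> snd z \<le> snd w)" by auto
      have q2: "(fst z - fst w \<le> 0 \<and> snd w - snd z \<le> 0) = (fst z \<le> fst w \<and> snd w \<le> snd z)" by auto
      show ?thesis using pair_point[OF a0 assms(2), of "fst z - fst w" "snd w - snd z"]
        unfolding p e q1 q2 .
    qed
    then show ?thesis by simp
  qed
  also have "\<dots> = Bform a b (indicator D) (indicator E)"
    by (rule B_expand[OF sD sE a0 b0, symmetric])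
  finally show ?thesis by simp
qed

end
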